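(* Let $(A,d)$ be a $\mathbb{Z}/2$-graded $\Lambda$-algebra (not necessarily associative or commutative) with a differential $d$ satisfying the graded Leibniz rule, equipped with a map $\operatorname{val}:A\to\mathbb{R}\cup\{+\infty\}$ such that $\operatorname{val}^{-1}(+\infty)=\{0\}$ and for all $c\in\Lambda$, $x,y\in A$: $\operatorname{val}(x\cdot y)\ge\operatorname{val}(x)+\operatorname{val}(y)$, $\operatorname{val}(dx)\ge\operatorname{val}(x)$, $\operatorname{val}(cx)=\operatorname{val}(c)+\operatorname{val}(x)$, $\operatorname{val}(x+y)\ge\min\{\operatorname{val}(x),\operatorname{val}(y)\}$; assume $A$ is complete with respect to the non-Archimedean norm $e^{-\operatorname{val}}$. Let $a$ be a nonzero idempotent in the cohomology $H(A)$ (with its induced product). Then every closed element of degree $0$ of $A$ representing $a$ has non-positive valuation.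
   Context: $\Lambda$ is the Novikov field of series $\sum_{i\ge0}a_iT^{\lambda_i}$, $a_i\in\mathbb{Q}$, $\lambda_i\in\mathbb{R}$ strictly increasing to $+\infty$, with valuation $\operatorname{val}$ (smallest exponent with nonzero coefficient). *)

theory Defs
  imports "HOL-Library.Extended_Real"
begin

text \<open>An element \<Sum> a_i T^(lambda_i) (a_i rational, lambda_i strictly increasing to +infinity,
  finitely or infinitely many terms) is represented by its coefficient function
  real \<Rightarrow> rat; the condition is that below every bound only finitely many
  exponents carry a nonzero coefficient.\<close>

definition novikov :: "(real \<Rightarrow> rat) set" where
  "novikov = {f. \<forall>C::real. finite {r. f r \<noteq> 0 \<and> r \<le> C}}"

definition nov_zero :: "real \<Rightarrow> rat" where
  "nov_zero = (\<lambda>r. 0)"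

definition nov_one :: "real \<Rightarrow> rat" where
  "nov_one = (\<lambda>r. if r = 0 then 1 else 0)"

definition nov_add :: "(real \<Rightarrow> rat) \<Rightarrow> (real \<Rightarrow> rat) \<Rightarrow> (real \<Rightarrow> rat)" where
  "nov_add f g = (\<lambda>r. f r + g r)"

definition nov_mult :: "(real \<Rightarrow> rat) \<Rightarrow> (real \<Rightarrow> rat) \<Rightarrow> (real \<Rightarrow> rat)" where
  "nov_mult f g = (\<lambda>r. \<Sum>s\<in>{s. f s \<noteq> 0 \<and> g (r - s) \<noteq> 0}. f s * g (r - s))"

definition nov_val :: "(real \<Rightarrow> rat) \<Rightarrow> ereal" where
  "nov_val f = (if f = nov_zero then \<infinity> else ereal (Inf {r. f r \<noteq> 0}))"

text \<open>A0, A1: even and odd parts; sm: scalar multiplication by \<Lambda>;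
  mu: (not necessarily associative/commutative) bilinear product; d: differential;
  v: valuation with values in R \<union> {+\<infinity>}.\<close>

locale valued_dga =
  fixes A0 A1 :: "'a::ab_group_add set"
    and sm :: "(real \<Rightarrow> rat) \<Rightarrow> 'a \<Rightarrow> 'a"
    and mu :: "'a \<Rightarrow> 'a \<Rightarrow> 'a"
    and d :: "'a \<Rightarrow> 'a"
    and v :: "'a \<Rightarrow> ereal"
  assumes
    sm_add_right: "c \<in> novikov \<Longrightarrow> sm c (x + y) = sm c x + sm c y"
    and sm_add_left: "c \<in> novikov \<Longrightarrow> c' \<in> novikov \<Longrightarrow> sm (nov_add c c') x = sm c x + sm c' x"
    and sm_mult: "c \<in> novikov \<Longrightarrow> c' \<in> novikov \<Longrightarrow> sm (nov_mult c c') x = sm c (sm c' x)"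
    and sm_one: "sm nov_one x = x"
    and mu_add_left: "mu (x + y) z = mu x z + mu y z"
    and mu_add_right: "mu x (y + z) = mu x y + mu x z"
    and mu_sm_left: "c \<in> novikov \<Longrightarrow> mu (sm c x) y = sm c (mu x y)"
    and mu_sm_right: "c \<in> novikov \<Longrightarrow> mu x (sm c y) = sm c (mu x y)"
    and A0_zero: "0 \<in> A0" and A1_zero: "0 \<in> A1"
    and A0_add: "x \<in> A0 \<Longrightarrow> y \<in> A0 \<Longrightarrow> x + y \<in> A0"
    and A1_add: "x \<in> A1 \<Longrightarrow> y \<in> A1 \<Longrightarrow> x + y \<in> A1"
    and A0_sm: "c \<in> novikov \<Longrightarrow> x \<in> A0 \<Longrightarrow> sm c x \<in> A0"
    and A1_sm: "c \<in> novikov \<Longrightarrow> x \<in> A1 \<Longrightarrow> sm c x \<in> A1"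
    and direct_sum: "\<And>x. \<exists>!p. p \<in> A0 \<times> A1 \<and> x = fst p + snd p"
    and mu_00: "x \<in> A0 \<Longrightarrow> y \<in> A0 \<Longrightarrow> mu x y \<in> A0"
    and mu_01: "x \<in> A0 \<Longrightarrow> y \<in> A1 \<Longrightarrow> mu x y \<in> A1"
    and mu_10: "x \<in> A1 \<Longrightarrow> y \<in> A0 \<Longrightarrow> mu x y \<in> A1"
    and mu_11: "x \<in> A1 \<Longrightarrow> y \<in> A1 \<Longrightarrow> mu x y \<in> A0"
    and d_add: "d (x + y) = d x + d y"
    and d_sm: "c \<in> novikov \<Longrightarrow> d (sm c x) = sm c (d x)"
    and d_d: "d (d x) = 0"
    and d_A0: "x \<in> A0 \<Longrightarrow> d x \<in> A1"
    and d_A1: "x \<in> A1 \<Longrightarrow> d x \<in> A0"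
    and leibniz_even: "x \<in> A0 \<Longrightarrow> d (mu x y) = mu (d x) y + mu x (d y)"
    and leibniz_odd: "x \<in> A1 \<Longrightarrow> d (mu x y) = mu (d x) y - mu x (d y)"
    and v_not_minf: "v x \<noteq> -\<infinity>"
    and v_inf_iff: "v x = \<infinity> \<longleftrightarrow> x = 0"
    and v_mu: "v (mu x y) \<ge> v x + v y"
    and v_d: "v (d x) \<ge> v x"
    and v_sm: "c \<in> novikov \<Longrightarrow> v (sm c x) = nov_val c + v x"
    and v_add: "v (x + y) \<ge> min (v x) (v y)"
    \<comment> \<open>completeness w.r.t. the norm exp(-v): every Cauchy sequence converges\<close>
    and complete: "\<And>s :: nat \<Rightarrow> 'a.
        (\<forall>M::real. \<exists>N. \<forall>m\<ge>N. \<forall>n\<ge>N. v (s m - s n) \<ge> ereal M) \<Longrightarrow>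
        \<exists>L. \<forall>M::real. \<exists>N. \<forall>n\<ge>N. v (s n - L) \<ge> ereal M"

end

theory Submission
  imports Defs
begin

fun zseq :: "('a \<Rightarrow> 'a \<Rightarrow> 'a) \<Rightarrow> 'a \<Rightarrow> nat \<Rightarrow> 'a" where
  "zseq mu x 0 = x"
| "zseq mu x (Suc n) = mu (zseq mu x n) (zseq mu x n)"

fun useq :: "('a::plus \<Rightarrow> 'a \<Rightarrow> 'a) \<Rightarrow> 'a \<Rightarrow> 'a \<Rightarrow> nat \<Rightarrow> 'a" where
  "useq mu x y 0 = y"
| "useq mu x y (Suc n) = mu (useq mu x y n) (zseq mu x (Suc n)) + mu (zseq mu x n) (useq mu x y n)"

lemma ereal_all_inf: "(\<And>M. ereal M \<le> e) \<Longrightarrow> e = \<infinity>"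
  by (cases e) (auto, metis less_add_one not_le)

lemma ereal_grow:
  assumes "b \<noteq> -\<infinity>" "(l::real) > 0"
  shows "\<exists>N. \<forall>n\<ge>N. ereal M \<le> b + ereal (real n * l)"
proof (cases b)
  case (real r)
  obtain N :: nat where N: "real N > (M - r) / l" using reals_Archimedean2 by blast
  have "\<forall>n\<ge>N. ereal M \<le> b + ereal (real n * l)"
  proof (intro allI impI)
    fix n assume "n \<ge> N"
    hence "real n * l \<ge> real N * l" using assms(2) by (simp add: mult_right_mono)
    moreover have "real N * l > M - r" using N assms(2) by (simp add: field_simps)
    ultimately show "ereal M \<le> b + ereal (real n * l)" using real by simp
  qed
  thus ?thesis by blast
qed (use assms in auto)

context valued_dga
begin

lemma d_zero: "d 0 = 0"
  using d_add[of 0 0] by simp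

lemma d_neg: "d (- a) = - d a"
  using d_add[of "-a" a] d_zero by (simp add: eq_neg_iff_add_eq_0)

lemma d_diff: "d (a - b) = d a - d b"
  using d_add[of a "-b"] d_neg by simp

lemma mu_zero_r: "mu a 0 = 0"
  using mu_add_right[of a 0 0] by simp

lemma mu_zero_l: "mu 0 a = 0"
  using mu_add_left[of 0 0 a] by simp

lemma mu_neg_l: "mu (- a) c = - mu a c"
  using mu_add_left[of "-a" a c] mu_zero_l by (simp add: eq_neg_iff_add_eq_0)

lemma mu_diff_l: "mu (a - b) c = mu a c - mu b c"
  using mu_add_left[of a "-b" c] mu_neg_l by simp

lemma mu_neg_r: "mu c (- a) = - mu c a"
  using mu_add_right[of c "-a" a] mu_zero_r by (simp add: eq_neg_iff_add_eq_0)

lemma mu_diff_r: "mu c (a - b) = mu c a - mu c b"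
  using mu_add_right[of c a "-b"] mu_neg_r by simp

lemma v_neg: "v (- a) = v a"
proof -
  define m1 :: "real \<Rightarrow> rat" where "m1 = (\<lambda>r. if r = 0 then -1 else 0)"
  have m1n: "m1 \<in> novikov" unfolding novikov_def m1_def
  proof (intro CollectI allI)
    fix C :: real
    show "finite {r. (if r = 0 then -1 else 0::rat) \<noteq> 0 \<and> r \<le> C}"
      by (rule finite_subset[of _ "{0}"]) auto
  qed
  have zn: "nov_zero \<in> novikov" unfolding novikov_def nov_zero_def by simp
  have on: "nov_one \<in> novikov" unfolding novikov_def nov_one_def
  proof (intro CollectI allI)
    fix C :: real
    show "finite {r. (if r = 0 then 1 else 0::rat) \<noteq> 0 \<and> r \<le> C}"
      by (rule finite_subset[of _ "{0}"]) auto
  qed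
  have zz: "nov_add nov_zero nov_zero = nov_zero" unfolding nov_add_def nov_zero_def by simp
  have s0: "sm nov_zero a = 0"
    using sm_add_left[OF zn zn, of a] zz by simp
  have "nov_add nov_one m1 = nov_zero" unfolding nov_add_def nov_one_def m1_def nov_zero_def
    by auto
  hence "a + sm m1 a = 0" using sm_add_left[OF on m1n, of a] s0 sm_one by simp
  hence e: "sm m1 a = - a" by (simp add: add.commute eq_neg_iff_add_eq_0)
  have "m1 0 \<noteq> nov_zero 0" unfolding m1_def nov_zero_def by simp
  hence "m1 \<noteq> nov_zero" by force
  moreover have "{r. m1 r \<noteq> 0} = {0}" unfolding m1_def by auto
  ultimately have "nov_val m1 = 0" unfolding nov_val_def by (simp add: zero_ereal_def)
  thus ?thesis using v_sm[OF m1n, of a] e by simp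
qed

lemma v_diff_sym: "v (a - b) = v (b - a)"
  using v_neg[of "a - b"] by simp

lemma d_mu_closed:
  assumes "d c = 0"
  shows "d (mu w c) = mu (d w) c"
proof -
  obtain p where p: "p \<in> A0 \<times> A1" "w = fst p + snd p" using direct_sum by blast
  have "d (mu (fst p) c) = mu (d (fst p)) c"
    using leibniz_even[of "fst p" c] p assms mu_zero_r by auto
  moreover have "d (mu (snd p) c) = mu (d (snd p)) c"
    using leibniz_odd[of "snd p" c] p assms mu_zero_r by auto
  ultimately show ?thesis using p(2) by (simp add: mu_add_left d_add)
qed

end

theorem lemma3p1:
  fixes A0 A1 :: "'a::ab_group_add set"
    and sm :: "(real \<Rightarrow> rat) \<Rightarrow> 'a \<Rightarrow> 'a"
    and mu :: "'a \<Rightarrow> 'a \<Rightarrow> 'a"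
    and d :: "'a \<Rightarrow> 'a"
    and v :: "'a \<Rightarrow> ereal"
    and x :: 'a
  assumes "valued_dga A0 A1 sm mu d v"
    and "x \<in> A0"
    and "d x = 0"
    and "\<exists>y. mu x x - x = d y"
    and "\<not> (\<exists>y. x = d y)"
  shows "v x \<le> 0"
proof (rule ccontr)
  interpret valued_dga A0 A1 sm mu d v by fact
  assume "\<not> v x \<le> 0"
  hence vx: "v x > 0" by simp
  have "x \<noteq> 0" using assms(5) d_zero by metis
  hence "v x \<noteq> \<infinity>" using v_inf_iff by simp
  then obtain l where l: "v x = ereal l" using v_not_minf[of x] by (cases "v x") auto
  have lpos: "l > 0" using vx l by (simp add: zero_ereal_def)
  obtain y where y: "mu x x - x = d y" using assms(4) by blast
  define z where "z = zseq mu x"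
  define u where "u = useq mu x y"
  define b where "b = v y"
  have bn: "b \<noteq> -\<infinity>" unfolding b_def by (rule v_not_minf)
  have zprop: "z n \<in> A0 \<and> d (z n) = 0 \<and> v (z n) \<ge> ereal (real (Suc n) * l)" for n
  proof (induction n)
    case 0 thus ?case using assms(2,3) l by (simp add: z_def)
  next
    case (Suc n)
    have zs: "z (Suc n) = mu (z n) (z n)" by (simp add: z_def)
    have h1: "v (z (Suc n)) \<ge> v (z n) + v (z n)" using zs v_mu by simp
    have h2: "ereal l \<le> ereal (real (Suc n) * l)" using lpos by simp
    have h3: "v (z n) \<ge> ereal l" using Suc h2 by (meson order_trans)
    have "v (z n) + v (z n) \<ge> ereal (real (Suc n) * l) + ereal l"
      using Suc h3 add_mono by blast
    hence "v (z (Suc n)) \<ge> ereal (real (Suc n) * l) + ereal l"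
      using h1 order_trans by blast
    hence "v (z (Suc n)) \<ge> ereal (real (Suc (Suc n)) * l)" by (simp add: algebra_simps)
    moreover have "z (Suc n) \<in> A0" using zs Suc mu_00 by simp
    moreover have "d (z (Suc n)) = 0" using zs Suc leibniz_even[of "z n" "z n"] mu_zero_l mu_zero_r
      by simp
    ultimately show ?case by simp
  qed
  have zl: "v (z n) \<ge> ereal l" for n
  proof -
    have "real (Suc n) * l \<ge> l" using lpos by simp
    thus ?thesis using zprop[of n] order_trans ereal_less_eq(3) by blast
  qed
  have uprop: "z (Suc n) - z n = d (u n) \<and> v (u n) \<ge> b + ereal (real n * l)" for n
  proof (induction n)
    case 0 thus ?case using y by (simp add: z_def u_def b_def)
  next
    case (Suc n)
    have us: "u (Suc n) = mu (u n) (z (Suc n)) + mu (z n) (u n)" by (simp add: u_def z_def)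
    have zs: "z (Suc (Suc n)) = mu (z (Suc n)) (z (Suc n))" "z (Suc n) = mu (z n) (z n)"
      by (simp_all add: z_def)
    have "z (Suc (Suc n)) - z (Suc n)
        = mu (z (Suc n) - z n) (z (Suc n)) + mu (z n) (z (Suc n) - z n)"
      unfolding zs mu_diff_l mu_diff_r by (simp add: zs(2)[symmetric])
    also have "\<dots> = mu (d (u n)) (z (Suc n)) + mu (z n) (d (u n))" using Suc by simp
    also have "\<dots> = d (u (Suc n))" unfolding us d_add
      using d_mu_closed[of "z (Suc n)" "u n"] zprop[of "Suc n"] zprop[of n]
        leibniz_even[of "z n" "u n"] mu_zero_l by simp
    finally have e1: "z (Suc (Suc n)) - z (Suc n) = d (u (Suc n))" .
    have t: "b + ereal (real (Suc n) * l) = (b + ereal (real n * l)) + ereal l"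
      by (simp add: algebra_simps add.assoc)
    have "v (mu (u n) (z (Suc n))) \<ge> v (u n) + v (z (Suc n))" by (rule v_mu)
    moreover have "v (u n) + v (z (Suc n)) \<ge> (b + ereal (real n * l)) + ereal l"
      using Suc zl add_mono by blast
    ultimately have a1: "v (mu (u n) (z (Suc n))) \<ge> b + ereal (real (Suc n) * l)"
      using t by simp
    have "v (mu (z n) (u n)) \<ge> v (z n) + v (u n)" by (rule v_mu)
    moreover have "v (z n) + v (u n) \<ge> (b + ereal (real n * l)) + ereal l"
      using Suc zl add_mono by (metis add.commute)
    ultimately have a2: "v (mu (z n) (u n)) \<ge> b + ereal (real (Suc n) * l)"
      using t by simp
    have "v (u (Suc n)) \<ge> b + ereal (real (Suc n) * l)"
      using us v_add[of "mu (u n) (z (Suc n))" "mu (z n) (u n)"] a1 a2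
      by (metis min.bounded_iff order_trans)
    with e1 show ?case by simp
  qed
  define S where "S = (\<lambda>N. \<Sum>n<N. u n)"
  have dS: "d (S N) = z N - x" for N
  proof (induction N)
    case 0 thus ?case by (simp add: S_def z_def d_zero)
  next
    case (Suc N)
    have "d (S (Suc N)) = d (S N) + d (u N)" by (simp add: S_def d_add)
    moreover have "z (Suc N) = d (u N) + z N" using uprop[of N] by (simp add: diff_eq_eq)
    ultimately show ?case using Suc by (simp add: algebra_simps)
  qed
  have Sk: "v (S (n + k) - S n) \<ge> b + ereal (real n * l)" for n k
  proof (induction k)
    case 0 have "v 0 = \<infinity>" using v_inf_iff by simp thus ?case by simp
  next
    case (Suc k)
    have "S (n + Suc k) - S n = (S (n + k) - S n) + u (n + k)" by (simp add: S_def)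
    moreover have "v (u (n + k)) \<ge> b + ereal (real n * l)"
    proof -
      have "ereal (real n * l) \<le> ereal (real (n + k) * l)" using lpos by simp
      hence "b + ereal (real n * l) \<le> b + ereal (real (n + k) * l)" by (rule add_left_mono)
      thus ?thesis using uprop[of "n + k"] using order_trans by blast
    qed
    ultimately show ?case using Suc v_add[of "S (n + k) - S n" "u (n + k)"]
      by (metis min.bounded_iff order_trans)
  qed
  have cauchy: "\<forall>M::real. \<exists>N. \<forall>m\<ge>N. \<forall>n\<ge>N. v (S m - S n) \<ge> ereal M"
  proof
    fix M :: real
    obtain N where N: "\<forall>n\<ge>N. ereal M \<le> b + ereal (real n * l)" using ereal_grow[OF bn lpos] by blast
    have "\<forall>m\<ge>N. \<forall>n\<ge>N. v (S m - S n) \<ge> ereal M"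
    proof (intro allI impI)
      fix m n assume mn: "m \<ge> N" "n \<ge> N"
      show "v (S m - S n) \<ge> ereal M"
      proof (cases "n \<le> m")
        case True
        then obtain k where "m = n + k" using le_Suc_ex by blast
        thus ?thesis using Sk[of n k] N mn by (metis order_trans)
      next
        case False
        then obtain k where "n = m + k" using le_Suc_ex[of m n] by auto
        thus ?thesis using Sk[of m k] N mn v_diff_sym by (metis order_trans)
      qed
    qed
    thus "\<exists>N. \<forall>m\<ge>N. \<forall>n\<ge>N. v (S m - S n) \<ge> ereal M" by blast
  qed
  obtain L where L: "\<forall>M::real. \<exists>N. \<forall>n\<ge>N. v (S n - L) \<ge> ereal M"
    using complete[OF cauchy] by blast
  have "v (x + d L) = \<infinity>"
  proof (rule ereal_all_inf)
    fix M :: real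
    obtain N1 where N1: "\<forall>n\<ge>N1. v (S n - L) \<ge> ereal M" using L by blast
    obtain N2 where N2: "\<forall>n\<ge>N2. ereal M \<le> 0 + ereal (real n * l)"
      using ereal_grow[of 0 l M] lpos by auto
    define N where "N = max N1 N2"
    have "x + d L = z N + d (L - S N)" using dS[of N] by (simp add: d_diff)
    moreover have "v (z N) \<ge> ereal M"
    proof -
      have "ereal (real N * l) \<le> ereal (real (Suc N) * l)" using lpos by simp
      thus ?thesis using N2 zprop[of N] N_def by (metis add_0 max.cobounded2 order_trans)
    qed
    moreover have "v (d (L - S N)) \<ge> ereal M"
      using v_d[of "L - S N"] N1 N_def v_diff_sym[of L "S N"] by (metis max.cobounded1 order_trans)
    ultimately show "ereal M \<le> v (x + d L)"
      using v_add[of "z N" "d (L - S N)"] by (metis min.bounded_iff order_trans)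
  qed
  hence "x + d L = 0" using v_inf_iff by simp
  hence "x = d (- L)" using d_neg by (simp add: add_eq_0_iff2)
  thus False using assms(5) by blast
qed

end
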